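(* Let $\vec d=(\vec a,\vec b)$ be a bidegree sequence of length $n$ with $\sum_i a_i=\sum_i b_i=n\bar c$, and let $M=\max\vec d$ with $M<n$. (i) If $k:=\#\{i: a_i=M\}$ satisfies $M\le k$, then $\vec d$ is graphic with loops. (ii) More generally, if there is $k\in\mathbb{N}$ with $M\le k$ and $Mk\le n\bar c$, then $\vec d$ is graphic with loops.
   Context: A bidegree sequence of length $n$ is a pair $\vec d=(\vec a,\vec b)$ with $\vec a=(a_1,\dots,a_n)\in\mathbb{N}_0^n$ and $\vec b=(b_1,\dots,b_n)\in\mathbb{N}_0^n$. It is graphic with loops if there is an $n\times n$ matrix with entries in $\{0,1\}$ whose $i$th row sum is $a_i$ and whose $i$th column sum is $b_i$ for every $i\in[1..n]$; it is graphic if such a matrix exists with all diagonal entries equal to $0$. $\max\vec d$ and $\min\vec d$ denote the maximum and minimum over all $2n$ entries $a_1,\dots,a_n,b_1,\dots,b_n$. The number $\bar c$ (the average degree) is defined by $\sum_i a_i=\sum_i b_i=n\bar c$. *)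

theory Defs
  imports Main
begin

definition graphic_with_loops :: "nat \<Rightarrow> (nat \<Rightarrow> nat) \<Rightarrow> (nat \<Rightarrow> nat) \<Rightarrow> bool" where
  "graphic_with_loops n a b \<longleftrightarrow>
     (\<exists>X :: nat \<Rightarrow> nat \<Rightarrow> nat.
        (\<forall>i<n. \<forall>j<n. X i j \<in> {0, 1}) \<and>
        (\<forall>i<n. (\<Sum>j<n. X i j) = a i) \<and>
        (\<forall>j<n. (\<Sum>i<n. X i j) = b j))"

definition maxd :: "nat \<Rightarrow> (nat \<Rightarrow> nat) \<Rightarrow> (nat \<Rightarrow> nat) \<Rightarrow> nat" where
  "maxd n a b = Max (a ` {..<n} \<union> b ` {..<n})"

end

theory Submission
  imports Defs
begin

lemma top_set:
  fixes b :: "nat \<Rightarrow> nat"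
  assumes "k \<le> n"
  shows "\<exists>T. T \<subseteq> {..<n} \<and> card T = k \<and> (\<forall>j\<in>T. \<forall>j'\<in>{..<n}-T. b j' \<le> b j)"
  using assms
proof (induction k)
  case 0
  then show ?case by (intro exI[of _ "{}"]) auto
next
  case (Suc k)
  then obtain T where T: "T \<subseteq> {..<n}" "card T = k" "\<forall>j\<in>T. \<forall>j'\<in>{..<n}-T. b j' \<le> b j"
    by auto
  define A where "A = {..<n} - T"
  have fA: "finite A" unfolding A_def by auto
  have "card A = n - k" unfolding A_def using T by (simp add: card_Diff_subset finite_subset)
  hence neA: "A \<noteq> {}" using Suc.prems by auto
  have "Max (b ` A) \<in> b ` A" using fA neA by (intro Max_in) auto
  then obtain m where m: "m \<in> A" "b m = Max (b ` A)" by auto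
  have mmax: "\<forall>x\<in>A. b x \<le> b m" using m fA by auto
  have fT: "finite T" using T finite_subset by blast
  show ?case
  proof (intro exI[of _ "insert m T"] conjI)
    show "insert m T \<subseteq> {..<n}" using T m unfolding A_def by auto
    show "card (insert m T) = Suc k" using T fT m unfolding A_def by auto
    show "\<forall>j\<in>insert m T. \<forall>j'\<in>{..<n} - insert m T. b j' \<le> b j"
      using T mmax unfolding A_def by auto
  qed
qed

lemma gale_ryser:
  fixes a :: "nat \<Rightarrow> nat"
  assumes "finite I"
  shows "\<And>b. sum a I = (\<Sum>j<n. b j) \<Longrightarrow>
     (\<forall>R. R \<subseteq> I \<longrightarrow> sum a R \<le> (\<Sum>j<n. min (b j) (card R))) \<Longrightarrow>
     \<exists>X :: nat \<Rightarrow> nat \<Rightarrow> nat. (\<forall>i\<in>I. \<forall>j<n. X i j \<in> {0,1}) \<and>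
        (\<forall>i\<in>I. (\<Sum>j<n. X i j) = a i) \<and> (\<forall>j<n. (\<Sum>i\<in>I. X i j) = b j)"
  using assms
proof (induction I rule: finite_induct)
  case empty
  then show ?case by (intro exI[of _ "\<lambda>_ _. 0"]) auto
next
  case (insert r F)
  have c1: "a r \<le> (\<Sum>j<n. min (b j) 1)"
    using insert.prems(2)[rule_format, of "{r}"] by auto
  have "(\<Sum>j<n. min (b j) 1) \<le> (\<Sum>j<n. 1)" by (intro sum_mono) auto
  hence arn: "a r \<le> n" using c1 by simp
  obtain T where T: "T \<subseteq> {..<n}" "card T = a r" "\<forall>j\<in>T. \<forall>j'\<in>{..<n}-T. b j' \<le> b j"
    using top_set[OF arn] by blast
  have fT: "finite T" using T finite_subset by blast
  have Tpos: "\<forall>j\<in>T. b j \<ge> 1"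
  proof (rule ccontr)
    assume "\<not> ?thesis"
    then obtain j0 where j0: "j0 \<in> T" "b j0 = 0" by auto
    have sub: "{j. j < n \<and> b j \<ge> 1} \<subseteq> T - {j0}" using T j0 by force
    have "(\<Sum>j<n. min (b j) 1) = (\<Sum>j\<in>{j. j < n \<and> b j \<ge> 1}. 1)"
    proof -
      have "(\<Sum>j<n. min (b j) 1) = (\<Sum>j<n. if b j \<ge> 1 then 1 else 0)"
        by (intro sum.cong) auto
      also have "\<dots> = (\<Sum>j\<in>{j. j < n \<and> b j \<ge> 1}. 1)"
        by (simp add: sum.If_cases) (rule arg_cong[where f=card], auto)
      finally show ?thesis by simp
    qed
    also have "\<dots> = card {j. j < n \<and> b j \<ge> 1}" by simp
    also have "\<dots> \<le> card (T - {j0})" using sub fT by (intro card_mono) auto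
    also have "\<dots> < a r" proof -
      have "card T > 0" using j0 fT by (auto simp: card_gt_0_iff)
      thus ?thesis using j0 fT T by simp
    qed
    finally show False using c1 by simp
  qed
  define b' where "b' j = (if j \<in> T then b j - 1 else b j)" for j
  have sumb: "(\<Sum>j<n. b j) = (\<Sum>j<n. b' j) + a r"
  proof -
    have "(\<Sum>j<n. b j) = (\<Sum>j<n. b' j + (if j \<in> T then 1 else 0))"
      using Tpos unfolding b'_def by (intro sum.cong) auto
    also have "\<dots> = (\<Sum>j<n. b' j) + (\<Sum>j<n. (if j \<in> T then 1 else 0))"
      by (simp add: sum.distrib)
    also have "(\<Sum>j<n. (if j \<in> T then 1 else 0::nat)) = card T"
    proof -
      have "(\<Sum>j<n. (if j \<in> T then 1 else 0::nat)) = card ({..<n} \<inter> T)"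
        by (simp add: sum.If_cases)
      also have "{..<n} \<inter> T = T" using T by auto
      finally show ?thesis .
    qed
    finally show ?thesis using T by simp
  qed
  have s1: "sum a F = (\<Sum>j<n. b' j)" using insert.prems(1) insert.hyps sumb by simp
  have s2: "\<forall>R. R \<subseteq> F \<longrightarrow> sum a R \<le> (\<Sum>j<n. min (b' j) (card R))"
  proof (intro allI impI)
    fix R assume RF: "R \<subseteq> F"
    have fR: "finite R" using RF insert.hyps finite_subset by blast
    have rR: "r \<notin> R" using RF insert.hyps by auto
    define q where "q = card R"
    show "sum a R \<le> (\<Sum>j<n. min (b' j) (card R))"
    proof (cases "\<forall>j<n. b j > q \<longrightarrow> j \<in> T")
      case True
      have "sum a (insert r R) \<le> (\<Sum>j<n. min (b j) (card (insert r R)))"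
        using insert.prems(2) RF by (meson insert_mono)
      also have "card (insert r R) = Suc q" using fR rR q_def by simp
      also have "(\<Sum>j<n. min (b j) (Suc q)) = (\<Sum>j<n. min (b' j) q + (if j \<in> T then 1 else 0))"
      proof (intro sum.cong refl)
        fix j assume j: "j \<in> {..<n}"
        show "min (b j) (Suc q) = min (b' j) q + (if j \<in> T then 1 else 0)"
        proof (cases "j \<in> T")
          case True
          then show ?thesis using Tpos unfolding b'_def by (cases "b j") auto
        next
          case False
          then show ?thesis using \<open>\<forall>j<n. b j > q \<longrightarrow> j \<in> T\<close> j unfolding b'_def by force
        qed
      qed
      also have "\<dots> = (\<Sum>j<n. min (b' j) q) + (\<Sum>j<n. (if j \<in> T then 1 else 0))"
        by (simp add: sum.distrib)
      also have "(\<Sum>j<n. (if j \<in> T then 1 else 0::nat)) = card T"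
      proof -
        have "(\<Sum>j<n. (if j \<in> T then 1 else 0::nat)) = card ({..<n} \<inter> T)"
          by (simp add: sum.If_cases)
        also have "{..<n} \<inter> T = T" using T by auto
        finally show ?thesis .
      qed
      finally show ?thesis using fR rR T q_def by simp
    next
      case False
      then obtain j0 where j0: "j0 < n" "b j0 > q" "j0 \<notin> T" by auto
      have "sum a R \<le> (\<Sum>j<n. min (b j) q)" using insert.prems(2) RF q_def by auto
      also have "\<dots> = (\<Sum>j<n. min (b' j) q)"
      proof (intro sum.cong refl)
        fix j assume j: "j \<in> {..<n}"
        show "min (b j) q = min (b' j) q"
        proof (cases "j \<in> T")
          case True
          hence "b j0 \<le> b j" using T j0 by auto
          then show ?thesis using True j0 unfolding b'_def by auto
        qed (auto simp: b'_def)
      qed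
      finally show ?thesis using q_def by simp
    qed
  qed
  obtain X' where X': "\<forall>i\<in>F. \<forall>j<n. X' i j \<in> {0,1}" "\<forall>i\<in>F. (\<Sum>j<n. X' i j) = a i"
    "\<forall>j<n. (\<Sum>i\<in>F. X' i j) = b' j"
    using insert.IH[OF s1 s2] by blast
  define X where "X i j = (if i = r then (if j \<in> T then 1 else 0) else X' i j)" for i j
  show ?case
  proof (intro exI[of _ X] conjI ballI allI impI)
    fix i j assume "i \<in> insert r F" "j < n"
    then show "X i j \<in> {0,1}" using X' unfolding X_def by auto
  next
    fix i assume i: "i \<in> insert r F"
    show "(\<Sum>j<n. X i j) = a i"
    proof (cases "i = r")
      case True
      have "(\<Sum>j<n. X i j) = (\<Sum>j<n. (if j \<in> T then 1 else 0::nat))"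
        unfolding X_def using True by simp
      also have "\<dots> = card ({..<n} \<inter> T)" by (simp add: sum.If_cases)
      also have "{..<n} \<inter> T = T" using T by auto
      finally show ?thesis using T True by simp
    next
      case False
      then show ?thesis using i X' unfolding X_def by auto
    qed
  next
    fix j assume j: "j < n"
    have "(\<Sum>i\<in>insert r F. X i j) = X r j + (\<Sum>i\<in>F. X i j)"
      using insert.hyps by simp
    also have "(\<Sum>i\<in>F. X i j) = (\<Sum>i\<in>F. X' i j)"
      using insert.hyps unfolding X_def by (intro sum.cong) auto
    finally show "(\<Sum>i\<in>insert r F. X i j) = b j"
      using X'(3) j Tpos unfolding X_def b'_def by auto
  qed
qed

theorem corollary2:
  fixes n :: nat and a b :: "nat \<Rightarrow> nat"
  assumes sums: "(\<Sum>i<n. a i) = (\<Sum>i<n. b i)"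
    and Mn: "maxd n a b < n"
  shows "(maxd n a b \<le> card {i. i < n \<and> a i = maxd n a b} \<longrightarrow> graphic_with_loops n a b)
       \<and> ((\<exists>k::nat. maxd n a b \<le> k \<and> maxd n a b * k \<le> (\<Sum>i<n. a i)) \<longrightarrow> graphic_with_loops n a b)"
proof -
  define M where "M = maxd n a b"
  define S where "S = (\<Sum>i<n. a i)"
  have aM: "a i \<le> M" if "i < n" for i
    unfolding M_def maxd_def using that by (intro Max_ge) auto
  have bM: "b i \<le> M" if "i < n" for i
    unfolding M_def maxd_def using that by (intro Max_ge) auto
  have main: "graphic_with_loops n a b" if SM: "M * M \<le> S"
  proof -
    have cond: "\<forall>R. R \<subseteq> {..<n} \<longrightarrow> sum a R \<le> (\<Sum>j<n. min (b j) (card R))"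
    proof (intro allI impI)
      fix R assume R: "R \<subseteq> {..<n}"
      define q where "q = card R"
      have fR: "finite R" using R finite_subset by blast
      have saR: "sum a R \<le> q * M"
      proof -
        have "sum a R \<le> (\<Sum>i\<in>R. M)" using R aM by (intro sum_mono) auto
        thus ?thesis using q_def by simp
      qed
      show "sum a R \<le> (\<Sum>j<n. min (b j) (card R))"
      proof (cases "M \<le> q")
        case True
        have "(\<Sum>j<n. min (b j) q) = (\<Sum>j<n. b j)"
          using bM True by (intro sum.cong) (auto simp: min_def intro: le_trans)
        moreover have "sum a R \<le> S" unfolding S_def using R by (intro sum_mono2) auto
        ultimately show ?thesis using sums q_def S_def by simp
      next
        case False
        have "q * S = (\<Sum>j<n. q * b j)" using sums S_def by (simp add: sum_distrib_left)
        also have "\<dots> \<le> (\<Sum>j<n. M * min (b j) q)"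
        proof (intro sum_mono)
          fix j assume j: "j \<in> {..<n}"
          show "q * b j \<le> M * min (b j) q"
          proof (cases "b j \<le> q")
            case True
            then show ?thesis using False by (simp add: min_def)
          next
            case nt: False
            then show ?thesis using bM[of j] j by (simp add: min_def mult.commute)
          qed
        qed
        also have "\<dots> = M * (\<Sum>j<n. min (b j) q)" by (simp add: sum_distrib_left)
        finally have A: "q * S \<le> M * (\<Sum>j<n. min (b j) q)" .
        have "M * (q * M) \<le> q * S" using SM by (metis mult.commute mult.left_commute mult_le_mono2)
        hence "M * (q * M) \<le> M * (\<Sum>j<n. min (b j) q)" using A by linarith
        hence "q * M \<le> (\<Sum>j<n. min (b j) q)" using False by simp
        thus ?thesis using saR q_def by simp
      qed
    qed
    obtain X :: "nat \<Rightarrow> nat \<Rightarrow> nat" where X: "\<forall>i\<in>{..<n}. \<forall>j<n. X i j \<in> {0,1}"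
      "\<forall>i\<in>{..<n}. (\<Sum>j<n. X i j) = a i" "\<forall>j<n. (\<Sum>i\<in>{..<n}. X i j) = b j"
      using gale_ryser[where I="{..<n}" and a=a and n=n and b=b] sums cond by auto
    show ?thesis unfolding graphic_with_loops_def using X by auto
  qed
  have p1: "graphic_with_loops n a b" if h: "M \<le> card {i. i < n \<and> a i = M}"
  proof -
    have "card {i. i < n \<and> a i = M} * M = (\<Sum>i\<in>{i. i < n \<and> a i = M}. a i)" by simp
    also have "\<dots> \<le> S" unfolding S_def by (intro sum_mono2) auto
    finally have "card {i. i < n \<and> a i = M} * M \<le> S" .
    moreover have "M * M \<le> card {i. i < n \<and> a i = M} * M" using h by simp
    ultimately show ?thesis using main by linarith
  qed
  have p2: "graphic_with_loops n a b" if h: "M \<le> k" "M * k \<le> S" for k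
  proof -
    have "M * M \<le> M * k" using h by simp
    thus ?thesis using h main by linarith
  qed
  show ?thesis using p1 p2 unfolding M_def S_def by blast
qed

end
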